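(* Let $\nu_n$ and $\nu_n'$ be two neighborhood systems on $N_n$ such that $\nu_n$ is weakly finer than $\nu_n'$, i.e. $\nu_n(i)\subset\nu_n'(i)$ for every $i\in N_n$. Suppose that $\nu_n$ is undirected, and that a triangular array of sub-$\sigma$-fields $\{\mathcal{F}_i\}_{i\in N_n}$ of $\mathcal{F}$ is CND with respect to $(\nu_n,\mathcal{M})$ for some array of sub-$\sigma$-fields $\mathcal{M}=\{\mathcal{M}_i\}_{i\in N_n}$. Then $\{\mathcal{F}_i\}_{i\in N_n}$ is CND with respect to $(\nu_n',\mathcal{M})$.
   Context: Let $(\Omega,\mathcal{F},P)$ be a probability space and $N_n$ a finite set with $|N_n|=n$. A neighborhood system on $N_n$ is a map $\nu_n:N_n\to 2^{N_n}$ with $i\notin\nu_n(i)$ for all $i\in N_n$. It is undirected if $i\in\nu_n(j)$ implies $j\in\nu_n(i)$ for all $i,j\in N_n$. For $A\subset N_n$ let $\bar\nu_n(A)=\left(\bigcup_{i\in A}\nu_n(i)\right)\cup A$ and $\nu_n(A)=\bar\nu_n(A)\setminus A$. For an array of sub-$\sigma$-fields $\{\mathcal{M}_i\}_{i\in N_n}$ and $A\subset N_n$, $\mathcal{M}_A$ denotes the smallest $\sigma$-field containing all $\mathcal{M}_i$, $i\in A$ (the trivial $\sigma$-field if $A=\varnothing$); the same notation is used for other arrays (e.g. $\mathcal{F}_A$), and $\mathcal{G}_1\vee\mathcal{G}_2$ denotes the smallest $\sigma$-field containing $\mathcal{G}_1$ and $\mathcal{G}_2$. Definition (CND): given a neighborhood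 system $\nu_n$ and $\mathcal{M}=\{\mathcal{M}_i\}_{i\in N_n}$, the $\sigma$-fields $\{\mathcal{F}_i\}_{i\in N_n'}$ for a subset $N_n'\subset N_n$ are conditionally neighborhood dependent (CND) with respect to $(\nu_n,\mathcal{M})$ if for any $A,B\subset N_n'$ with $A\subset N_n'\setminus\bar\nu_n(B)$ and $B\subset N_n'\setminus\bar\nu_n(A)$, the $\sigma$-fields $\mathcal{F}_A\vee\mathcal{M}_A$ and $\mathcal{F}_B\vee\mathcal{M}_B$ are conditionally independent given $\mathcal{M}_{\nu_n(A)}$. Here $N_n'=N_n$. *)

theory Defs
  imports "HOL-Probability.Probability"
begin

definition nbhd_system :: "'i set \<Rightarrow> ('i \<Rightarrow> 'i set) \<Rightarrow> bool" where
  "nbhd_system N nu \<longleftrightarrow> (\<forall>i\<in>N. nu i \<subseteq> N \<and> i \<notin> nu i)"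

definition undirected :: "'i set \<Rightarrow> ('i \<Rightarrow> 'i set) \<Rightarrow> bool" where
  "undirected N nu \<longleftrightarrow> (\<forall>i\<in>N. \<forall>j\<in>N. i \<in> nu j \<longrightarrow> j \<in> nu i)"

definition nbar :: "('i \<Rightarrow> 'i set) \<Rightarrow> 'i set \<Rightarrow> 'i set" where
  "nbar nu A = (\<Union>i\<in>A. nu i) \<union> A"

definition nset :: "('i \<Rightarrow> 'i set) \<Rightarrow> 'i set \<Rightarrow> 'i set" where
  "nset nu A = nbar nu A - A"

definition gen_sigma :: "'a measure \<Rightarrow> ('i \<Rightarrow> 'a measure) \<Rightarrow> 'i set \<Rightarrow> 'a measure" where
  "gen_sigma M F A = sigma (space M) (\<Union>i\<in>A. sets (F i))"

definition gen_sigma2 :: "'a measure \<Rightarrow> ('i \<Rightarrow> 'a measure) \<Rightarrow> ('i \<Rightarrow> 'a measure) \<Rightarrow> 'i set \<Rightarrow> 'a measure" where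
  "gen_sigma2 M F G A = sigma (space M) (\<Union>i\<in>A. sets (F i) \<union> sets (G i))"

definition cond_indep :: "'a measure \<Rightarrow> 'a measure \<Rightarrow> 'a measure \<Rightarrow> 'a measure \<Rightarrow> bool" where
  "cond_indep M G1 G2 H \<longleftrightarrow>
     (\<forall>A\<in>sets G1. \<forall>B\<in>sets G2.
        AE x in M. real_cond_exp M H (indicator (A \<inter> B)) x
                   = real_cond_exp M H (indicator A) x * real_cond_exp M H (indicator B) x)"

definition CND :: "'a measure \<Rightarrow> 'i set \<Rightarrow> ('i \<Rightarrow> 'i set) \<Rightarrow> ('i \<Rightarrow> 'a measure) \<Rightarrow> ('i \<Rightarrow> 'a measure) \<Rightarrow> bool" where
  "CND M N nu Mf F \<longleftrightarrow>
     (\<forall>A B. A \<subseteq> N - nbar nu B \<longrightarrow> B \<subseteq> N - nbar nu A \<longrightarrow>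
        cond_indep M (gen_sigma2 M F Mf A) (gen_sigma2 M F Mf B) (gen_sigma M Mf (nset nu A)))"

end

theory Submission
  imports Defs
begin


lemma dynkin_integral_eq:
  fixes f g :: "'a \<Rightarrow> real"
  assumes fm: "finite_measure M" and fi: "integrable M f" and gi: "integrable M g"
    and P: "Int_stable P" "P \<subseteq> Pow (space M)" "sigma_sets (space M) P \<subseteq> sets M"
    and top: "space M \<in> P"
    and eq: "\<And>D. D \<in> P \<Longrightarrow> (\<integral>x. indicator D x * f x \<partial>M) = (\<integral>x. indicator D x * g x \<partial>M)"
    and D: "D \<in> sigma_sets (space M) P"
  shows "(\<integral>x. indicator D x * f x \<partial>M) = (\<integral>x. indicator D x * g x \<partial>M)"
  using P(1,2) D
proof (induction rule: sigma_sets_induct_disjoint)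
  case (basic A) then show ?case by (rule eq)
next
  case empty then show ?case by simp
next
  case (compl A)
  have A: "A \<in> sets M" using compl.hyps P(3) by blast
  have *: "indicator (space M - A) x * h x = h x - indicator A x * h x" if "x \<in> space M" for x and h :: "'a \<Rightarrow> real"
    using that by (auto simp: indicator_def)
  have "(\<integral>x. indicator (space M - A) x * f x \<partial>M) = (\<integral>x. f x - indicator A x * f x \<partial>M)"
    by (rule Bochner_Integration.integral_cong) (auto simp: *)
  also have "\<dots> = (\<integral>x. f x \<partial>M) - (\<integral>x. indicator A x * f x \<partial>M)"
    by (rule Bochner_Integration.integral_diff) (auto intro: fi integrable_mult_indicator[OF A fi, simplified])
  also have "(\<integral>x. f x \<partial>M) = (\<integral>x. g x \<partial>M)"
  proof -
    have "(\<integral>x. f x \<partial>M) = (\<integral>x. indicator (space M) x * f x \<partial>M)"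
      by (rule Bochner_Integration.integral_cong) auto
    also have "\<dots> = (\<integral>x. indicator (space M) x * g x \<partial>M)" by (rule eq[OF top])
    also have "\<dots> = (\<integral>x. g x \<partial>M)"
      by (rule Bochner_Integration.integral_cong) auto
    finally show ?thesis .
  qed
  also have "(\<integral>x. g x \<partial>M) - (\<integral>x. indicator A x * f x \<partial>M) = (\<integral>x. g x - indicator A x * g x \<partial>M)"
    using compl.IH
    by (subst Bochner_Integration.integral_diff) (auto intro: gi integrable_mult_indicator[OF A gi, simplified])
  also have "\<dots> = (\<integral>x. indicator (space M - A) x * g x \<partial>M)"
    by (rule Bochner_Integration.integral_cong) (auto simp: *)
  finally show ?case .
next
  case (union A)
  have A: "\<And>i. A i \<in> sets M" using union.hyps P(3) by blast
  have disj: "\<And>i j. i \<noteq> j \<Longrightarrow> A i \<inter> A j = {}" using union.hyps(1) by (auto simp: disjoint_family_on_def)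
  have U: "(\<Union>i. A i) \<in> sets M" using A by blast
  have "(\<integral>x. indicator (\<Union>i. A i) x * f x \<partial>M) = (LINT x:(\<Union>i. A i)|M. f x)"
    by (simp add: set_lebesgue_integral_def)
  also have "\<dots> = (\<Sum>i. (LINT x:(A i)|M. f x))"
    by (rule lebesgue_integral_countable_add) (use A disj integrable_mult_indicator[OF U fi] in \<open>auto simp: set_integrable_def\<close>)
  also have "\<dots> = (\<Sum>i. (LINT x:(A i)|M. g x))"
    using union.IH by (simp add: set_lebesgue_integral_def)
  also have "\<dots> = (LINT x:(\<Union>i. A i)|M. g x)"
    by (rule lebesgue_integral_countable_add[symmetric]) (use A disj integrable_mult_indicator[OF U gi] in \<open>auto simp: set_integrable_def\<close>)
  also have "\<dots> = (\<integral>x. indicator (\<Union>i. A i) x * g x \<partial>M)"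
    by (simp add: set_lebesgue_integral_def)
  finally show ?case .
qed

lemma bnd_int:
  fixes f :: "'a \<Rightarrow> real" and c :: real
  assumes "finite_measure M" "f \<in> borel_measurable M" "AE x in M. \<bar>f x\<bar> \<le> c"
  shows "integrable M f"
proof -
  interpret finite_measure M by fact
  have 1: "integrable M (\<lambda>_. c)" by simp
  have 2: "AE x in M. norm (f x) \<le> norm c" using assms(3) by eventually_elim auto
  show ?thesis using 1 assms(2) 2 by (rule Bochner_Integration.integrable_bound)
qed

lemma cexp_ind_bnd:
  assumes "prob_space M" "subalgebra M H" "X \<in> sets M"
  shows "AE x in M. 0 \<le> real_cond_exp M H (indicator X) x \<and> real_cond_exp M H (indicator X) x \<le> 1"
proof -
  interpret prob_space M by fact
  interpret H: finite_measure_subalgebra M H using assms(2) by unfold_locales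
  have i: "integrable M (indicator X :: 'a \<Rightarrow> real)" using assms(3) by (intro integrable_real_indicator) (auto simp: less_top[symmetric])
  have "AE x in M. 0 \<le> real_cond_exp M H (indicator X) x"
    by (rule H.real_cond_exp_pos) (use assms(3) in auto)
  moreover have "AE x in M. real_cond_exp M H (indicator X) x \<le> 1"
    by (rule H.real_cond_exp_le_c[OF i]) (auto simp: indicator_def)
  ultimately show ?thesis by eventually_elim auto
qed

lemma wu_core:
  assumes ps: "prob_space M"
    and sG1: "subalgebra M G1" and sG2: "subalgebra M G2" and sH: "subalgebra M H"
    and sK: "subalgebra M K" and sH': "subalgebra M H'"
    and KG2: "sets K \<subseteq> sets G2"
    and H'eq: "sets H' = sigma_sets (space M) (sets H \<union> sets K)"
    and ci: "cond_indep M G1 G2 H"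
    and X: "X \<in> sets G1" and Y: "Y \<in> sets G2"
  shows "AE x in M. real_cond_exp M H' (indicator (X \<inter> Y)) x
           = real_cond_exp M H (indicator X) x * real_cond_exp M H' (indicator Y) x"
proof -
  interpret prob_space M by (rule ps)
  interpret H: finite_measure_subalgebra M H using sH by unfold_locales
  interpret H': finite_measure_subalgebra M H' using sH' by unfold_locales
  have fm: "finite_measure M" by unfold_locales
  have XM: "X \<in> sets M" using X sG1 by (auto simp: subalgebra_def)
  have YM: "Y \<in> sets M" using Y sG2 by (auto simp: subalgebra_def)
  have HM: "sets H \<subseteq> sets M" and KM: "sets K \<subseteq> sets M" using sH sK by (auto simp: subalgebra_def)
  have spH: "space H = space M" "space K = space M" "space H' = space M"
    using sH sK sH' by (auto simp: subalgebra_def)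
  have HH's: "sets H \<subseteq> sets H'" "sets K \<subseteq> sets H'" using H'eq by auto
  have HH': "subalgebra H' H" using HH's spH by (auto simp: subalgebra_def)
  define h where "h = real_cond_exp M H (indicator X)"
  define e where "e = real_cond_exp M H' (indicator Y)"
  have hH: "h \<in> borel_measurable H" unfolding h_def by simp
  have hH': "h \<in> borel_measurable H'" by (rule measurable_from_subalg[OF HH' hH])
  have hM: "h \<in> borel_measurable M" unfolding h_def by simp
  have eH': "e \<in> borel_measurable H'" unfolding e_def by simp
  have eM: "e \<in> borel_measurable M" unfolding e_def by simp
  have hb: "AE x in M. 0 \<le> h x \<and> h x \<le> 1" unfolding h_def by (rule cexp_ind_bnd[OF ps sH XM])
  have eb: "AE x in M. 0 \<le> e x \<and> e x \<le> 1" unfolding e_def by (rule cexp_ind_bnd[OF ps sH' YM])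
  have heI: "integrable M (\<lambda>x. h x * e x)"
    by (rule bnd_int[OF fm, of _ 1]) (use hM eM in simp, use hb eb in \<open>eventually_elim, auto simp: abs_mult intro: mult_le_one\<close>)
  have heH': "(\<lambda>x. h x * e x) \<in> borel_measurable H'" using hH' eH' by simp
  have XYI: "integrable M (indicator (X \<inter> Y) :: 'a \<Rightarrow> real)"
    using XM YM by (intro integrable_real_indicator) (auto simp: less_top[symmetric])
  define P where "P = {D1 \<inter> D2 | D1 D2. D1 \<in> sets H \<and> D2 \<in> sets K}"
  have PH: "sets H \<subseteq> P"
  proof
    fix D assume "D \<in> sets H"
    moreover have "D \<inter> space M = D" using \<open>D \<in> sets H\<close> HM sets.sets_into_space by blast
    ultimately show "D \<in> P" unfolding P_def using sets.top[of K] spH by blast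
  qed
  have PK: "sets K \<subseteq> P"
  proof
    fix D assume "D \<in> sets K"
    moreover have "space M \<inter> D = D" using \<open>D \<in> sets K\<close> KM sets.sets_into_space by blast
    ultimately show "D \<in> P" unfolding P_def using sets.top[of H] spH by blast
  qed
  have PH': "P \<subseteq> sets H'" unfolding P_def using HH's by auto
  have Psig: "sigma_sets (space M) P = sets H'"
  proof
    show "sigma_sets (space M) P \<subseteq> sets H'"
      using sets.sigma_sets_subset[OF PH'] spH by simp
    show "sets H' \<subseteq> sigma_sets (space M) P"
      unfolding H'eq using PH PK by (intro sigma_sets_subseteq) auto
  qed
  have PInt: "Int_stable P"
    unfolding Int_stable_def P_def
  proof (clarify)
    fix a1 a2 b1 b2 assume "a1 \<in> sets H" "a2 \<in> sets K" "b1 \<in> sets H" "b2 \<in> sets K"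
    then show "\<exists>D1 D2. a1 \<inter> a2 \<inter> (b1 \<inter> b2) = D1 \<inter> D2 \<and> D1 \<in> sets H \<and> D2 \<in> sets K"
      by (intro exI[of _ "a1 \<inter> b1"] exI[of _ "a2 \<inter> b2"]) auto
  qed
  have PPow: "P \<subseteq> Pow (space M)"
  proof
    fix D assume "D \<in> P"
    then have DH: "D \<in> sets H'" using PH' by auto
    show "D \<in> Pow (space M)" using sets.sets_into_space[OF DH] spH by auto
  qed
  have PM: "sigma_sets (space M) P \<subseteq> sets M" using Psig sH' by (simp add: subalgebra_def)
  have top: "space M \<in> P" using PH sets.top[of H] spH by auto
  have basic: "(\<integral>x. indicator D x * indicator (X \<inter> Y) x \<partial>M) = (\<integral>x. indicator D x * (h x * e x) \<partial>M)"
    if "D \<in> P" for D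
  proof -
    obtain D1 D2 where D: "D = D1 \<inter> D2" "D1 \<in> sets H" "D2 \<in> sets K" using \<open>D \<in> P\<close> unfolding P_def by blast
    have D1M: "D1 \<in> sets M" using D HM by auto
    have D2M: "D2 \<in> sets M" using D KM by auto
    have YD2: "Y \<inter> D2 \<in> sets G2" using Y D(3) KG2 by auto
    have YD2M: "Y \<inter> D2 \<in> sets M" using YM D2M by auto
    define k where "k = real_cond_exp M H (indicator (Y \<inter> D2))"
    have kM: "k \<in> borel_measurable M" unfolding k_def by simp
    have kb: "AE x in M. 0 \<le> k x \<and> k x \<le> 1" unfolding k_def by (rule cexp_ind_bnd[OF ps sH YD2M])
    have D1H: "(indicator D1 :: 'a \<Rightarrow> real) \<in> borel_measurable H" using D(2) by simp
    have D1H': "(\<lambda>x. indicator D1 x * indicator D2 x * h x) \<in> borel_measurable H'"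
      using D(2,3) HH's hH' by (intro borel_measurable_times borel_measurable_indicator) auto
    have D1hH: "(\<lambda>x. indicator D1 x * h x) \<in> borel_measurable H" using D(2) hH by (intro borel_measurable_times borel_measurable_indicator) auto
    have ciXY: "AE x in M. real_cond_exp M H (indicator (X \<inter> (Y \<inter> D2))) x = h x * k x"
      using ci X YD2 unfolding cond_indep_def h_def k_def by blast
    have "(\<integral>x. indicator D x * indicator (X \<inter> Y) x \<partial>M)
        = (\<integral>x. indicator D1 x * indicator (X \<inter> (Y \<inter> D2)) x \<partial>M :: real)"
      unfolding D by (intro Bochner_Integration.integral_cong) (auto simp: indicator_def)
    also have "\<dots> = (\<integral>x. indicator D1 x * real_cond_exp M H (indicator (X \<inter> (Y \<inter> D2))) x \<partial>M)"
    proof (rule H.real_cond_exp_intg(2)[symmetric])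
      show "integrable M (\<lambda>x. (indicator D1 x :: real) * indicator (X \<inter> (Y \<inter> D2)) x)"
        using D1M XM YD2M by (intro bnd_int[OF fm, of _ 1] borel_measurable_times borel_measurable_indicator) (auto simp: indicator_def)
    qed (use D1H XM YD2M in auto)
    also have "\<dots> = (\<integral>x. indicator D1 x * (h x * k x) \<partial>M)"
      by (rule integral_cong_AE) (use D1M hM kM ciXY in auto)
    also have "\<dots> = (\<integral>x. (indicator D1 x * h x) * k x \<partial>M)"
      by (simp add: ac_simps)
    also have "\<dots> = (\<integral>x. (indicator D1 x * h x) * indicator (Y \<inter> D2) x \<partial>M)"
      unfolding k_def
    proof (rule H.real_cond_exp_intg(2))
      show "integrable M (\<lambda>x. indicator D1 x * h x * indicator (Y \<inter> D2) x)"
        proof (rule bnd_int[OF fm, of _ 1])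
        show "(\<lambda>x. indicator D1 x * h x * indicator (Y \<inter> D2) x) \<in> borel_measurable M"
          using D1M hM YD2M by (intro borel_measurable_times borel_measurable_indicator) auto
        show "AE x in M. \<bar>indicator D1 x * h x * indicator (Y \<inter> D2) x\<bar> \<le> 1"
          using hb by eventually_elim (auto simp: indicator_def)
      qed
    qed (use D1hH YD2M in auto)
    also have "\<dots> = (\<integral>x. (indicator D1 x * indicator D2 x * h x) * indicator Y x \<partial>M)"
      by (intro Bochner_Integration.integral_cong) (auto simp: indicator_def)
    also have "\<dots> = (\<integral>x. (indicator D1 x * indicator D2 x * h x) * e x \<partial>M)"
      unfolding e_def
    proof (rule H'.real_cond_exp_intg(2)[symmetric])
      show "integrable M (\<lambda>x. (indicator D1 x :: real) * indicator D2 x * h x * indicator Y x)"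
        proof (rule bnd_int[OF fm, of _ 1])
        show "(\<lambda>x. indicator D1 x * indicator D2 x * h x * indicator Y x) \<in> borel_measurable M"
          using D1M D2M hM YM by (intro borel_measurable_times borel_measurable_indicator) auto
        show "AE x in M. \<bar>indicator D1 x * indicator D2 x * h x * indicator Y x\<bar> \<le> 1"
          using hb by eventually_elim (auto simp: indicator_def)
      qed
    qed (use D1H' YM in auto)
    also have "\<dots> = (\<integral>x. indicator D x * (h x * e x) \<partial>M)"
      unfolding D by (intro Bochner_Integration.integral_cong) (auto simp: indicator_def)
    finally show ?thesis .
  qed
  have "AE x in M. real_cond_exp M H' (indicator (X \<inter> Y)) x = h x * e x"
  proof (rule H'.real_cond_exp_charact)
    fix A assume A: "A \<in> sets H'"
    have "(\<integral>x. indicator A x * indicator (X \<inter> Y) x \<partial>M) = (\<integral>x. indicator A x * (h x * e x) \<partial>M)"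
      by (rule dynkin_integral_eq[OF fm XYI heI PInt PPow PM top basic]) (use A Psig in auto)
    then show "(\<integral>x\<in>A. indicator (X \<inter> Y) x \<partial>M) = (\<integral>x\<in>A. h x * e x \<partial>M)"
      by (simp add: set_lebesgue_integral_def)
  qed (use XYI heI heH' in auto)
  then show ?thesis unfolding h_def e_def .
qed


lemma weak_union:
  assumes ps: "prob_space M"
    and sG1: "subalgebra M G1" and sG2: "subalgebra M G2" and sH: "subalgebra M H"
    and sK: "subalgebra M K" and sH': "subalgebra M H'"
    and KG2: "sets K \<subseteq> sets G2" and G3: "sets G3 \<subseteq> sets G2"
    and H'eq: "sets H' = sigma_sets (space M) (sets H \<union> sets K)"
    and ci: "cond_indep M G1 G2 H"
  shows "cond_indep M G1 G3 H'"
  unfolding cond_indep_def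
proof (intro ballI)
  fix X Y assume X: "X \<in> sets G1" and Y: "Y \<in> sets G3"
  interpret prob_space M by (rule ps)
  interpret H': finite_measure_subalgebra M H' using sH' by unfold_locales
  have XM: "X \<in> sets M" using X sG1 by (auto simp: subalgebra_def)
  have XX: "X \<inter> space M = X" using sets.sets_into_space[OF XM] by auto
  have topG2: "space M \<in> sets G2" using sG2 by (metis sets.top subalgebra_def)
  have a: "AE x in M. real_cond_exp M H' (indicator (X \<inter> Y)) x
           = real_cond_exp M H (indicator X) x * real_cond_exp M H' (indicator Y) x"
    by (rule wu_core[OF ps sG1 sG2 sH sK sH' KG2 H'eq ci X]) (use Y G3 in auto)
  have b: "AE x in M. real_cond_exp M H' (indicator X) x
           = real_cond_exp M H (indicator X) x * real_cond_exp M H' (indicator (space M)) x"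
    using wu_core[OF ps sG1 sG2 sH sK sH' KG2 H'eq ci X topG2] by (simp add: XX)
  have topH': "space M \<in> sets H'" using sH' by (metis sets.top subalgebra_def)
  have c: "AE x in M. real_cond_exp M H' (indicator (space M)) x = indicator (space M) x"
  proof (rule H'.real_cond_exp_F_meas)
    show "integrable M (indicator (space M) :: 'a \<Rightarrow> real)"
      by (intro integrable_real_indicator) (auto simp: less_top[symmetric])
  qed (use topH' in auto)
  show "AE x in M. real_cond_exp M H' (indicator (X \<inter> Y)) x
           = real_cond_exp M H' (indicator X) x * real_cond_exp M H' (indicator Y) x"
    using a b c AE_space by eventually_elim (auto simp: indicator_def)
qed

lemma gen_sigma_props:
  assumes "\<forall>i\<in>S. sets (Mf i) \<subseteq> sets M"
  shows "sets (gen_sigma M Mf S) = sigma_sets (space M) (\<Union>i\<in>S. sets (Mf i))"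
    "subalgebra M (gen_sigma M Mf S)"
proof -
  have U: "(\<Union>i\<in>S. sets (Mf i)) \<subseteq> sets M" using assms by blast
  have P: "(\<Union>i\<in>S. sets (Mf i)) \<subseteq> Pow (space M)"
    using U sets.space_closed[of M] by (rule order_trans)
  show 1: "sets (gen_sigma M Mf S) = sigma_sets (space M) (\<Union>i\<in>S. sets (Mf i))"
    unfolding gen_sigma_def by (rule sets_measure_of[OF P])
  have "sets (gen_sigma M Mf S) \<subseteq> sets M" unfolding 1 by (rule sets.sigma_sets_subset[OF U])
  moreover have "space (gen_sigma M Mf S) = space M" unfolding gen_sigma_def by (rule space_measure_of[OF P])
  ultimately show "subalgebra M (gen_sigma M Mf S)" unfolding subalgebra_def by blast
qed

lemma gen_sigma2_props:
  assumes "\<forall>i\<in>S. sets (F i) \<subseteq> sets M" "\<forall>i\<in>S. sets (Mf i) \<subseteq> sets M"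
  shows "sets (gen_sigma2 M F Mf S) = sigma_sets (space M) (\<Union>i\<in>S. sets (F i) \<union> sets (Mf i))"
    "subalgebra M (gen_sigma2 M F Mf S)"
proof -
  have U: "(\<Union>i\<in>S. sets (F i) \<union> sets (Mf i)) \<subseteq> sets M" using assms by blast
  have P: "(\<Union>i\<in>S. sets (F i) \<union> sets (Mf i)) \<subseteq> Pow (space M)"
    using U sets.space_closed[of M] by (rule order_trans)
  show 1: "sets (gen_sigma2 M F Mf S) = sigma_sets (space M) (\<Union>i\<in>S. sets (F i) \<union> sets (Mf i))"
    unfolding gen_sigma2_def by (rule sets_measure_of[OF P])
  have "sets (gen_sigma2 M F Mf S) \<subseteq> sets M" unfolding 1 by (rule sets.sigma_sets_subset[OF U])
  moreover have "space (gen_sigma2 M F Mf S) = space M" unfolding gen_sigma2_def by (rule space_measure_of[OF P])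
  ultimately show "subalgebra M (gen_sigma2 M F Mf S)" unfolding subalgebra_def by blast
qed

theorem lemma2p1:
  fixes M :: "'a measure" and N :: "'i set" and nu nu' :: "'i \<Rightarrow> 'i set"
    and F Mf :: "'i \<Rightarrow> 'a measure"
  assumes "prob_space M"
    and "finite N"
    and "nbhd_system N nu" and "nbhd_system N nu'"
    and "\<forall>i\<in>N. nu i \<subseteq> nu' i"
    and "undirected N nu"
    and "\<forall>i\<in>N. subalgebra M (F i)"
    and "\<forall>i\<in>N. subalgebra M (Mf i)"
    and "CND M N nu Mf F"
  shows "CND M N nu' Mf F"
  unfolding CND_def
proof (intro allI impI)
  fix A B assume AB: "A \<subseteq> N - nbar nu' B" and BA: "B \<subseteq> N - nbar nu' A"
  note ps = assms(1)
  have nu: "\<forall>i\<in>N. nu i \<subseteq> N \<and> i \<notin> nu i" and nu': "\<forall>i\<in>N. nu' i \<subseteq> N \<and> i \<notin> nu' i"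
    using assms(3,4) by (auto simp: nbhd_system_def)
  have und: "\<And>i j. i \<in> N \<Longrightarrow> j \<in> N \<Longrightarrow> i \<in> nu j \<Longrightarrow> j \<in> nu i"
    using assms(6) by (auto simp: undirected_def)
  have FM: "\<forall>i\<in>N. sets (F i) \<subseteq> sets M" and MM: "\<forall>i\<in>N. sets (Mf i) \<subseteq> sets M"
    using assms(7,8) by (auto simp: subalgebra_def)
  define C where "C = nset nu' A - nset nu A"
  have AN: "A \<subseteq> N" and BN: "B \<subseteq> N" using AB BA by auto
  have nsA: "nset nu A \<subseteq> nset nu' A" using assms(5) AN by (auto simp: nset_def nbar_def)
  have nsN: "nset nu' A \<subseteq> N" using nu' AN by (auto simp: nset_def nbar_def)
  have CN: "C \<subseteq> N" using nsN by (auto simp: C_def)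
  have nsN2: "nset nu A \<subseteq> N" using nsA nsN by auto
  have nsU: "nset nu' A = nset nu A \<union> C" using nsA by (auto simp: C_def)
  have c1: "A \<subseteq> N - nbar nu (B \<union> C)"
  proof
    fix a assume a: "a \<in> A"
    have aN: "a \<in> N" using a AN by auto
    have "a \<notin> B" using a BA by (auto simp: nbar_def)
    moreover have "a \<notin> C" using a by (auto simp: C_def nset_def)
    moreover have "a \<notin> nu b" if "b \<in> B" for b
      using that a AB assms(5) BN by (auto simp: nbar_def)
    moreover have "a \<notin> nu c" if "c \<in> C" for c
    proof
      assume "a \<in> nu c"
      then have "c \<in> nu a" using und[OF aN] CN that by auto
      then have "c \<in> nset nu A" using a that by (auto simp: nset_def nbar_def C_def)
      then show False using that by (auto simp: C_def)
    qed
    ultimately show "a \<in> N - nbar nu (B \<union> C)" using aN by (auto simp: nbar_def)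
  qed
  have c2: "B \<union> C \<subseteq> N - nbar nu A"
  proof -
    have "B \<inter> nbar nu A = {}" using BA assms(5) AN by (auto simp: nbar_def)
    moreover have "C \<inter> nbar nu A = {}" by (auto simp: C_def nset_def nbar_def)
    ultimately show ?thesis using BN CN by auto
  qed
  have ci: "cond_indep M (gen_sigma2 M F Mf A) (gen_sigma2 M F Mf (B \<union> C)) (gen_sigma M Mf (nset nu A))"
    using assms(9) c1 c2 unfolding CND_def by blast
  have BCN: "B \<union> C \<subseteq> N" using BN CN by auto
  note G1 = gen_sigma2_props[of A F M Mf] and G2 = gen_sigma2_props[of "B \<union> C" F M Mf]
    and G3 = gen_sigma2_props[of B F M Mf] and H = gen_sigma_props[of "nset nu A" Mf M]
    and K = gen_sigma_props[of C Mf M] and H' = gen_sigma_props[of "nset nu' A" Mf M]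
  have G1s: "subalgebra M (gen_sigma2 M F Mf A)" using AN FM MM by (intro G1) auto
  have G2s: "subalgebra M (gen_sigma2 M F Mf (B \<union> C))" using BCN FM MM by (intro G2) auto
  have Hs: "subalgebra M (gen_sigma M Mf (nset nu A))" using nsN2 MM by (intro H) auto
  have Ks: "subalgebra M (gen_sigma M Mf C)" using CN MM by (intro K) auto
  have H's: "subalgebra M (gen_sigma M Mf (nset nu' A))" using nsN MM by (intro H') auto
  have G2e: "sets (gen_sigma2 M F Mf (B \<union> C)) = sigma_sets (space M) (\<Union>i\<in>B \<union> C. sets (F i) \<union> sets (Mf i))"
    using BCN FM MM by (intro G2) auto
  have G3e: "sets (gen_sigma2 M F Mf B) = sigma_sets (space M) (\<Union>i\<in>B. sets (F i) \<union> sets (Mf i))"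
    using BN FM MM by (intro G3) auto
  have He: "sets (gen_sigma M Mf (nset nu A)) = sigma_sets (space M) (\<Union>i\<in>nset nu A. sets (Mf i))"
    using nsN2 MM by (intro H) auto
  have Ke: "sets (gen_sigma M Mf C) = sigma_sets (space M) (\<Union>i\<in>C. sets (Mf i))"
    using CN MM by (intro K) auto
  have H'e: "sets (gen_sigma M Mf (nset nu' A)) = sigma_sets (space M) (\<Union>i\<in>nset nu' A. sets (Mf i))"
    using nsN MM by (intro H') auto
  have KG2: "sets (gen_sigma M Mf C) \<subseteq> sets (gen_sigma2 M F Mf (B \<union> C))"
    unfolding Ke G2e by (rule sigma_sets_subseteq) auto
  have G3G2: "sets (gen_sigma2 M F Mf B) \<subseteq> sets (gen_sigma2 M F Mf (B \<union> C))"
    unfolding G3e G2e by (rule sigma_sets_subseteq) auto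
  define U1 where "U1 = (\<Union>i\<in>nset nu A. sets (Mf i))"
  define U2 where "U2 = (\<Union>i\<in>C. sets (Mf i))"
  have UU: "(\<Union>i\<in>nset nu' A. sets (Mf i)) = U1 \<union> U2" unfolding U1_def U2_def nsU by auto
  have s1: "sigma_sets (space M) (U1 \<union> U2) \<subseteq> sigma_sets (space M) (sigma_sets (space M) U1 \<union> sigma_sets (space M) U2)"
    by (rule sigma_sets_subseteq) auto
  have s2: "sigma_sets (space M) (sigma_sets (space M) U1 \<union> sigma_sets (space M) U2) \<subseteq> sigma_sets (space M) (U1 \<union> U2)"
  proof (rule sigma_sets_mono, rule Un_least)
    show "sigma_sets (space M) U1 \<subseteq> sigma_sets (space M) (U1 \<union> U2)"
      by (rule sigma_sets_subseteq) auto
    show "sigma_sets (space M) U2 \<subseteq> sigma_sets (space M) (U1 \<union> U2)"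
      by (rule sigma_sets_subseteq) auto
  qed
  have H'eq: "sets (gen_sigma M Mf (nset nu' A)) =
      sigma_sets (space M) (sets (gen_sigma M Mf (nset nu A)) \<union> sets (gen_sigma M Mf C))"
    unfolding H'e He Ke UU U1_def[symmetric] U2_def[symmetric] using s1 s2 by (rule equalityI)
  show "cond_indep M (gen_sigma2 M F Mf A) (gen_sigma2 M F Mf B) (gen_sigma M Mf (nset nu' A))"
    by (rule weak_union[OF ps G1s G2s Hs Ks H's KG2 G3G2 H'eq ci])
qed

end
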